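(* Consider the constrained online prediction problem and the \texttt{BanditQ} policy described in the context, run for $T$ rounds with $V_t=V=\Theta(\sqrt{T})$ for $1\le t\le T$. Then $\mathrm{Regret}_T=O(T^{3/4})$, where the constant hidden in $O(\cdot)$ does not depend on $T$ or on the reward sequence (it may depend on $N$ and on the constant in $V=\Theta(\sqrt{T})$).
   Context: There are $N$ users. On each round $t=1,2,\dots$ an online policy chooses a probability vector $\bm{x}(t)=(x_1(t),\dots,x_N(t))$ in the standard simplex $\Delta_N=\{\bm{x}\in\mathbb{R}^N_{\ge 0}:\sum_i x_i=1\}$; afterwards an adversarially chosen reward vector $\bm{r}(t)=(r_1(t),\dots,r_N(t))\in[0,1]^N$ is revealed (full information), and the policy may use all past reward vectors to choose $\bm{x}(t+1)$. A subset $\mathcal{P}\subseteq[N]$ of protected users is given, with target rates $\lambda_i\in[0,1]$, $i\in\mathcal{P}$, satisfying $\sum_{i\in\mathcal{P}}\lambda_i\le 1$; set $\lambda_i=0$ for $i\notin\mathcal{P}$. The feasible set of stationary actions is $\Omega=\{\bm{x}^*\in\Delta_N : r_i(t)x^*_i\ge\lambda_i \text{ for all } i\in\mathcal{P} \text{ and all rounds } t\}$, which is assumed nonempty. The regret of a policy over $T$ rounds is $\mathrm{Regret}_T=\sup_{\bm{x}^*\in\Omega}\sum_{t=1}^T\sum_{i=1}^N r_i(t)\,(x_i^*-x_i(t))$. The \texttt{BanditQ} policy: for each $i\in\mathcal{P}$ maintain $Q_i(0)=0$ and $Q_i(t)=\max\big(0,\,Q_i(t-1)+\lambda_i-r_i(t)x_i(t)\big)$;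 for $i\notin\mathcal{P}$ set $Q_i(t)=0$ for all $t$. Given a non-negative parameter sequence $(V_t)_{t\ge1}$, define surrogate rewards $r'_i(t)=(Q_i(t-1)+V_t)\,r_i(t)$ for all $i\in[N]$. Starting from an arbitrary $\bm{x}(1)\in\Delta_N$, the policy updates by adaptive online gradient ascent: $\bm{x}(t+1)=\Pi_{\Delta_N}\Big(\bm{x}(t)+\bm{r}'(t)\big/\sqrt{2\sum_{\tau=1}^{t}\|\bm{r}'(\tau)\|_2^2}\Big)$, where $\Pi_{\Delta_N}$ denotes Euclidean projection onto $\Delta_N$. *)

theory Defs
  imports "HOL-Analysis.Analysis"
begin

text \<open>Users are indexed by a finite type 'n (so N = CARD('n)); vectors in R^N are real^'n.
  Rounds are t = 1,2,...; r t is the reward vector revealed at round t.\<close>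

definition prob_simplex :: "(real ^ 'n::finite) set" where
  "prob_simplex = {x. (\<forall>i. 0 \<le> x $ i) \<and> (\<Sum>i\<in>UNIV. x $ i) = 1}"

definition proj_simplex :: "real ^ 'n::finite \<Rightarrow> real ^ 'n" where
  "proj_simplex y = closest_point prob_simplex y"

text \<open>State after k rounds (k = 0,1,...): (x(k+1), Q(k), sum_{tau=1}^{k} ||r'(tau)||^2).
  Parameters: rewards r, protected set P, target rates lam, parameter sequence V, initial x1.\<close>
primrec banditq_state ::
  "(nat \<Rightarrow> real ^ 'n::finite) \<Rightarrow> 'n set \<Rightarrow> real ^ 'n \<Rightarrow> (nat \<Rightarrow> real) \<Rightarrow> real ^ 'n
    \<Rightarrow> nat \<Rightarrow> (real ^ 'n) \<times> (real ^ 'n) \<times> real" where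
  "banditq_state r P lam V x1 0 = (x1, 0, 0)"
| "banditq_state r P lam V x1 (Suc k) =
    (let (x, Q, S) = banditq_state r P lam V x1 k;
         t = Suc k;
         r' = (\<chi> i. (Q $ i + V t) * r t $ i);
         S' = S + (norm r')\<^sup>2;
         x' = proj_simplex (x + (1 / sqrt (2 * S')) *\<^sub>R r');
         Q' = (\<chi> i. if i \<in> P then max 0 (Q $ i + lam $ i - r t $ i * x $ i) else 0)
     in (x', Q', S'))"

definition banditq_x ::
  "(nat \<Rightarrow> real ^ 'n::finite) \<Rightarrow> 'n set \<Rightarrow> real ^ 'n \<Rightarrow> (nat \<Rightarrow> real) \<Rightarrow> real ^ 'n
    \<Rightarrow> nat \<Rightarrow> real ^ 'n" where
  "banditq_x r P lam V x1 t = fst (banditq_state r P lam V x1 (t - 1))"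

definition feasible_set ::
  "(nat \<Rightarrow> real ^ 'n::finite) \<Rightarrow> 'n set \<Rightarrow> real ^ 'n \<Rightarrow> nat \<Rightarrow> (real ^ 'n) set" where
  "feasible_set r P lam T =
     {xs \<in> prob_simplex. \<forall>i\<in>P. \<forall>t\<in>{1..T}. r t $ i * xs $ i \<ge> lam $ i}"

definition banditq_regret ::
  "(nat \<Rightarrow> real ^ 'n::finite) \<Rightarrow> 'n set \<Rightarrow> real ^ 'n \<Rightarrow> (nat \<Rightarrow> real) \<Rightarrow> real ^ 'n
    \<Rightarrow> nat \<Rightarrow> real" where
  "banditq_regret r P lam V x1 T =
     Sup ((\<lambda>xs. \<Sum>t=1..T. \<Sum>i\<in>UNIV. r t $ i * (xs $ i - banditq_x r P lam V x1 t $ i))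
          ` feasible_set r P lam T)"

end

theory Submission
  imports Defs
begin


lemma simplex_closed: "closed (prob_simplex :: (real^'n::finite) set)"
proof -
  have "prob_simplex = (\<Inter>i. {x::real^'n. 0 \<le> x $ i}) \<inter> {x. (\<Sum>i\<in>UNIV. x $ i) = 1}"
    unfolding prob_simplex_def by auto
  moreover have "closed {x::real^'n. (\<Sum>i\<in>UNIV. x $ i) = 1}"
    by (intro closed_Collect_eq continuous_intros)
  moreover have "closed (\<Inter>i. {x::real^'n. 0 \<le> x $ i})"
    by (intro closed_INT ballI closed_Collect_le continuous_intros)
  ultimately show ?thesis by (metis closed_Int)
qed

lemma simplex_convex: "convex (prob_simplex :: (real^'n::finite) set)"
proof (unfold convex_def, intro ballI allI impI)
  fix x y :: "real^'n" and u v :: real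
  assume x: "x \<in> prob_simplex" and y: "y \<in> prob_simplex" and uv: "0 \<le> u" "0 \<le> v" "u + v = 1"
  have "(\<Sum>i\<in>UNIV. (u *\<^sub>R x + v *\<^sub>R y) $ i) = u * (\<Sum>i\<in>UNIV. x $ i) + v * (\<Sum>i\<in>UNIV. y $ i)"
    by (simp add: sum.distrib sum_distrib_left)
  also have "\<dots> = 1" using x y uv by (simp add: prob_simplex_def)
  finally show "u *\<^sub>R x + v *\<^sub>R y \<in> prob_simplex"
    using x y uv by (auto simp: prob_simplex_def)
qed

lemma proj_in:
  assumes "(x1::real^'n::finite) \<in> prob_simplex"
  shows "proj_simplex (y::real^'n) \<in> prob_simplex"
  unfolding proj_simplex_def
  apply (rule closest_point_in_set[OF simplex_closed]) using assms by (metis empty_iff)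

lemma proj_nonexp:
  assumes "(z::real^'n::finite) \<in> prob_simplex"
  shows "norm (proj_simplex y - z) \<le> norm (y - z)"
proof -
  have "dist (closest_point prob_simplex y) (closest_point prob_simplex z) \<le> dist y z"
    apply (rule closest_point_lipschitz[OF simplex_convex simplex_closed]) using assms by (metis empty_iff)
  then show ?thesis unfolding proj_simplex_def closest_point_self[OF assms] dist_norm .
qed

lemma proj_self: "(z::real^'n::finite) \<in> prob_simplex \<Longrightarrow> proj_simplex z = z"
  by (simp add: proj_simplex_def closest_point_self)

lemma simplex_le1: "(x::real^'n::finite) \<in> prob_simplex \<Longrightarrow> x $ i \<le> 1"
proof -
  assume a: "x \<in> prob_simplex"
  have "x $ i \<le> (\<Sum>j\<in>UNIV. x $ j)"
    by (rule member_le_sum) (use a in \<open>auto simp: prob_simplex_def\<close>)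
  then show ?thesis using a by (simp add: prob_simplex_def)
qed

lemma simplex_diam:
  assumes "(a::real^'n::finite) \<in> prob_simplex" "b \<in> prob_simplex"
  shows "(norm (a - b))\<^sup>2 \<le> 2"
proof -
  have "(norm (a - b))\<^sup>2 = (\<Sum>i\<in>UNIV. (a$i - b$i)\<^sup>2)"
    unfolding power2_norm_eq_inner inner_vec_def by (simp add: power2_eq_square)
  also have "\<dots> \<le> (\<Sum>i\<in>UNIV. a$i + b$i)"
  proof (rule sum_mono)
    fix i
    have "0 \<le> a$i" "0 \<le> b$i" using assms by (auto simp: prob_simplex_def)
    moreover have "a$i \<le> 1" "b$i \<le> 1" using assms simplex_le1 by auto
    ultimately have h: "\<bar>a$i - b$i\<bar> \<le> 1" "\<bar>a$i - b$i\<bar> \<le> a$i + b$i" by auto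
    have "\<bar>a$i - b$i\<bar> * \<bar>a$i - b$i\<bar> \<le> \<bar>a$i - b$i\<bar> * 1"
      by (rule mult_left_mono) (use h in auto)
    then show "(a$i - b$i)\<^sup>2 \<le> a$i + b$i" using h
      by (simp add: power2_eq_square abs_mult_self_eq)
  qed
  also have "\<dots> = 2" using assms by (simp add: sum.distrib prob_simplex_def)
  finally show ?thesis .
qed

lemma abel_aux:
  fixes w d :: "nat \<Rightarrow> real"
  assumes "\<And>k. 0 \<le> w k" "\<And>k. w k \<le> w (Suc k)" "\<And>k. 0 \<le> d k" "\<And>k. d k \<le> 2"
  shows "(\<Sum>k<Suc n. w k * (d k - d (Suc k))) \<le> 2 * w n - w n * d (Suc n)"
proof (induction n)
  case 0
  have "w 0 * d 0 \<le> w 0 * 2" by (rule mult_left_mono) (use assms in auto)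
  then show ?case by (simp add: algebra_simps)
next
  case (Suc n)
  have "(w (Suc n) - w n) * (2 - d (Suc n)) \<ge> 0"
    using assms(2)[of n] assms(4)[of "Suc n"] by simp
  then show ?case using Suc by (simp add: algebra_simps)
qed

lemma abel:
  fixes w d :: "nat \<Rightarrow> real"
  assumes "\<And>k. 0 \<le> w k" "\<And>k. w k \<le> w (Suc k)" "\<And>k. 0 \<le> d k" "\<And>k. d k \<le> 2"
  shows "(\<Sum>k<n. w k * (d k - d (Suc k))) \<le> 2 * w (n - 1)"
proof (cases n)
  case 0 then show ?thesis using assms(1)[of 0] by simp
next
  case (Suc m)
  have "w m * d (Suc m) \<ge> 0" using assms by simp
  then show ?thesis using abel_aux[of w d m, OF assms] Suc by simp
qed

lemma sqrt_step:
  fixes A a :: real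
  assumes "0 \<le> A" "0 \<le> a"
  shows "a / sqrt (A + a) \<le> 2 * (sqrt (A + a) - sqrt A)"
proof (cases "A + a = 0")
  case True then have "a = 0" using assms by linarith
  then show ?thesis by simp
next
  case False
  define u where "u = sqrt (A + a)"
  define v where "v = sqrt A"
  have Aa: "0 < A + a" using False assms by linarith
  have u: "u > 0" unfolding u_def using Aa by (rule real_sqrt_gt_zero)
  have v0: "0 \<le> v" unfolding v_def using assms(1) by (rule real_sqrt_ge_zero)
  have vu: "v \<le> u" unfolding u_def v_def using assms by (intro real_sqrt_le_mono) linarith
  have u2: "u^2 = A + a" unfolding u_def using Aa by (intro real_sqrt_pow2) linarith
  have v2: "v^2 = A" unfolding v_def using assms(1) by (rule real_sqrt_pow2)
  have a: "a = u^2 - v^2" using u2 v2 by linarith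
  have m: "(u - v) * v \<le> (u - v) * u" by (rule mult_left_mono) (use vu v0 in auto)
  have e: "u^2 - v^2 = (u - v) * u + (u - v) * v" by (simp add: power2_eq_square left_diff_distrib right_diff_distrib)
  have "u^2 - v^2 \<le> 2 * (u - v) * u" using m e by linarith
  then have "(u^2 - v^2) / u \<le> 2 * (u - v)" using u by (simp add: pos_divide_le_eq mult.commute mult.left_commute)
  then show ?thesis using a unfolding u_def v_def by simp
qed

lemma sqrt_sum:
  fixes a :: "nat \<Rightarrow> real"
  assumes "\<And>k. 0 \<le> a k"
  shows "(\<Sum>k<n. a k / sqrt (\<Sum>j<Suc k. a j)) \<le> 2 * sqrt (\<Sum>j<n. a j)"
proof (induction n)
  case 0 then show ?case by simp
next
  case (Suc n)
  have "0 \<le> (\<Sum>j<n. a j)" by (rule sum_nonneg) (use assms in auto)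
  then have "a n / sqrt ((\<Sum>j<n. a j) + a n) \<le> 2 * (sqrt ((\<Sum>j<n. a j) + a n) - sqrt (\<Sum>j<n. a j))"
    using sqrt_step assms by blast
  then show ?case using Suc by simp
qed

lemma quad_bound:
  fixes u a b :: real
  assumes "0 \<le> u" "0 \<le> a" "0 \<le> b" "u^2 \<le> a * u + b"
  shows "u \<le> a + sqrt b"
proof (rule ccontr)
  assume "\<not> ?thesis"
  then have h: "u > a + sqrt b" by simp
  have "u * (a + sqrt b) < u * u"
    by (rule mult_strict_left_mono) (use h assms in \<open>auto intro: le_less_trans[of 0 "a + sqrt b"]\<close>)
  moreover have "sqrt b * sqrt b \<le> u * sqrt b"
    by (rule mult_right_mono) (use h assms in auto)
  moreover have "sqrt b * sqrt b = b" using assms by simp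
  moreover have "u * (a + sqrt b) = a * u + u * sqrt b" by (simp add: algebra_simps)
  moreover have "u * u \<le> a * u + b" using assms(4) by (simp add: power2_eq_square)
  ultimately show False by linarith
qed



lemma bq_rec:
  fixes r :: "nat \<Rightarrow> real^'n::finite" and V :: "nat \<Rightarrow> real" and P :: "'n set" and lam x1 :: "real^'n" and k :: nat
  defines "st \<equiv> banditq_state r P lam V x1"
  defines "gg \<equiv> (\<chi> i. (fst (snd (st k)) $ i + V (Suc k)) * r (Suc k) $ i)"
  shows "snd (snd (st (Suc k))) = snd (snd (st k)) + (norm gg)\<^sup>2"
    and "fst (st (Suc k)) = proj_simplex (fst (st k) + (1 / sqrt (2 * snd (snd (st (Suc k))))) *\<^sub>R gg)"
    and "fst (snd (st (Suc k))) = (\<chi> i. if i \<in> P then max 0 (fst (snd (st k)) $ i + lam $ i - r (Suc k) $ i * fst (st k) $ i) else 0)"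
proof -
  obtain x Q S where e: "st k = (x, Q, S)" by (cases "st k") auto
  then have e': "banditq_state r P lam V x1 k = (x, Q, S)" by (simp add: st_def)
  show "snd (snd (st (Suc k))) = snd (snd (st k)) + (norm gg)\<^sup>2"
    unfolding gg_def st_def using e' by (simp add: Let_def)
  show "fst (st (Suc k)) = proj_simplex (fst (st k) + (1 / sqrt (2 * snd (snd (st (Suc k))))) *\<^sub>R gg)"
    unfolding gg_def st_def using e' by (simp add: Let_def)
  show "fst (snd (st (Suc k))) = (\<chi> i. if i \<in> P then max 0 (fst (snd (st k)) $ i + lam $ i - r (Suc k) $ i * fst (st k) $ i) else 0)"
    unfolding st_def banditq_state.simps(2) e' Let_def fst_conv snd_conv prod.case by (rule refl)
qed

lemma norm_add_sq:
  fixes a b :: "real^'n::finite"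
  shows "(norm (a + b))\<^sup>2 = (norm a)\<^sup>2 + 2 * (a \<bullet> b) + (norm b)\<^sup>2"
  by (simp add: power2_norm_eq_inner inner_add_left inner_add_right inner_commute)

lemma ogd_step:
  fixes x z g :: "real^'n::finite" and S :: real
  assumes x: "x \<in> prob_simplex" and z: "z \<in> prob_simplex" and gS: "(norm g)\<^sup>2 \<le> S"
  shows "g \<bullet> (z - x) \<le> sqrt (2 * S) / 2 * ((norm (x - z))\<^sup>2 - (norm (proj_simplex (x + (1 / sqrt (2 * S)) *\<^sub>R g) - z))\<^sup>2)
            + (norm g)\<^sup>2 / (2 * sqrt S)"
proof (cases "S = 0")
  case True
  then have "g = 0" using gS by simp
  then show ?thesis using True proj_self[OF x] by simp
next
  case False
  then have Sp: "S > 0" using gS by (smt (verit) zero_le_power2)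
  define s2 where "s2 = sqrt (2 * S)"
  have s2p: "s2 > 0" unfolding s2_def using Sp by simp
  define \<eta> where "\<eta> = 1 / s2"
  define W where "W = s2 / 2"
  define G where "G = g \<bullet> (x - z)"
  define n2 where "n2 = (norm g)\<^sup>2"
  define d where "d = (norm (x - z))\<^sup>2"
  define d' where "d' = (norm (proj_simplex (x + \<eta> *\<^sub>R g) - z))\<^sup>2"
  have "norm (proj_simplex (x + \<eta> *\<^sub>R g) - z) \<le> norm ((x - z) + \<eta> *\<^sub>R g)"
    using proj_nonexp[OF z, of "x + \<eta> *\<^sub>R g"] by (simp add: algebra_simps)
  then have "d' \<le> (norm ((x - z) + \<eta> *\<^sub>R g))\<^sup>2" unfolding d'_def
    by (simp add: power_mono)
  also have "\<dots> = d + 2 * \<eta> * G + \<eta>^2 * n2"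
    unfolding norm_add_sq d_def G_def n2_def by (simp add: inner_commute power_mult_distrib)
  finally have dd: "d' \<le> d + 2 * \<eta> * G + \<eta>^2 * n2" .
  have W0: "W \<ge> 0" unfolding W_def using s2p by simp
  have "W * d' \<le> W * (d + 2 * \<eta> * G + \<eta>^2 * n2)" using dd W0 by (rule mult_left_mono)
  also have "\<dots> = W * d + G + n2 / (2 * s2)"
    unfolding W_def \<eta>_def using s2p by (simp add: field_simps power2_eq_square)
  finally have h1: "- G \<le> W * (d - d') + n2 / (2 * s2)" by (simp add: algebra_simps)
  have "sqrt S \<le> s2" unfolding s2_def using Sp by simp
  then have h2: "n2 / (2 * s2) \<le> n2 / (2 * sqrt S)"
    unfolding n2_def by (intro divide_left_mono) (use Sp s2p in auto)
  have "g \<bullet> (z - x) = - G" unfolding G_def by (simp add: inner_diff_right)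
  then show ?thesis using h1 h2 unfolding W_def s2_def d_def d'_def n2_def \<eta>_def by linarith
qed



lemma main_bound:
  fixes r :: "nat \<Rightarrow> real^'n::finite" and P :: "'n set" and lam x1 xs :: "real^'n"
    and V :: real and T :: nat
  assumes rb: "\<forall>t\<in>{1..T}. \<forall>i. 0 \<le> r t $ i \<and> r t $ i \<le> 1"
    and lb: "\<forall>i\<in>P. 0 \<le> lam $ i \<and> lam $ i \<le> 1"
    and l0: "\<forall>i. i \<notin> P \<longrightarrow> lam $ i = 0"
    and x1: "x1 \<in> prob_simplex"
    and V0: "0 \<le> V"
    and xsF: "xs \<in> feasible_set r P lam T"
  shows "\<exists>u\<ge>0. u^2 \<le> 12 * real T * u + 2 * (real T)^2 * real CARD('n) + 4 * V * (real T)^2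
                      + 2 * real CARD('n) * real T * V^2
           \<and> V * (\<Sum>t=1..T. \<Sum>i\<in>UNIV. r t $ i * (xs $ i - banditq_x r P lam (\<lambda>_. V) x1 t $ i))
               \<le> 3 * u + real T * real CARD('n) / 2"
proof -
  define N where "N = real CARD('n)"
  define st where "st = banditq_state r P lam (\<lambda>_. V) x1"
  define X where "X k = fst (st k)" for k
  define Q where "Q k = fst (snd (st k))" for k
  define S where "S k = snd (snd (st k))" for k
  define g where "g k = (\<chi> i. (Q k $ i + V) * r (Suc k) $ i)" for k
  have rec1: "S (Suc k) = S k + (norm (g k))\<^sup>2" for k
    using bq_rec(1)[of r P lam "\<lambda>_. V" x1 k]
    unfolding X_def Q_def S_def g_def st_def by simp
  have rec2: "X (Suc k) = proj_simplex (X k + (1 / sqrt (2 * S (Suc k))) *\<^sub>R g k)" for k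
    using bq_rec(2)[of r P lam "\<lambda>_. V" x1 k]
    unfolding X_def Q_def S_def g_def st_def by simp
  have rec3: "Q (Suc k) = (\<chi> i. if i \<in> P then max 0 (Q k $ i + lam $ i - r (Suc k) $ i * X k $ i) else 0)" for k
    using bq_rec(3)[of r P lam "\<lambda>_. V" x1 k]
    unfolding X_def Q_def S_def g_def st_def by simp
  note rec = rec1 rec2 rec3
  have X0: "X 0 = x1" and Q0: "Q 0 = 0" and S0: "S 0 = 0"
    by (simp_all add: X_def Q_def S_def st_def)
  have xs: "xs \<in> prob_simplex" and feas: "\<And>i t. i \<in> P \<Longrightarrow> t \<in> {1..T} \<Longrightarrow> lam $ i \<le> r t $ i * xs $ i"
    using xsF by (auto simp: feasible_set_def)
  have rbk: "0 \<le> r (Suc k) $ i" "r (Suc k) $ i \<le> 1" if "k < T" for k i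
    using rb that by auto
  have Xs: "X k \<in> prob_simplex" for k
  proof (induction k)
    case 0 then show ?case using X0 x1 by simp
  next
    case (Suc k) then show ?case using rec(2)[of k] proj_in[OF x1] by simp
  qed
  have X01: "0 \<le> X k $ i" "X k $ i \<le> 1" for k i
    using Xs[of k] simplex_le1[of "X k" i] by (auto simp: prob_simplex_def)
  have xs01: "0 \<le> xs $ i" for i using xs by (auto simp: prob_simplex_def)
  have Qnn: "0 \<le> Q k $ i" for k i
  proof (cases k)
    case 0 then show ?thesis using Q0 by simp
  next
    case (Suc m) then show ?thesis using rec(3)[of m] by simp
  qed
  have QnP: "Q k $ i = 0" if "i \<notin> P" for k i
  proof (cases k)
    case 0 then show ?thesis using Q0 by simp
  next
    case (Suc m) then show ?thesis using rec(3)[of m] that by simp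
  qed
  have Ssum: "S k = (\<Sum>j<k. (norm (g j))\<^sup>2)" for k
    by (induction k) (simp_all add: S0 rec(1))
  have S0le: "0 \<le> S k" for k unfolding Ssum by (simp add: sum_nonneg)
  have Smono: "S m \<le> S n" if "m \<le> n" for m n
    unfolding Ssum by (rule sum_mono2) (use that in auto)

  define w where "w k = sqrt (2 * S (Suc k)) / 2" for k
  define d where "d k = (norm (X k - xs))\<^sup>2" for k
  have step: "g k \<bullet> (xs - X k) \<le> w k * (d k - d (Suc k)) + (norm (g k))\<^sup>2 / (2 * sqrt (S (Suc k)))" for k
  proof -
    have "(norm (g k))\<^sup>2 \<le> S (Suc k)" using rec(1)[of k] S0le[of k] by simp
    from ogd_step[OF Xs[of k] xs this] show ?thesis
      unfolding w_def d_def rec(2)[of k] .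
  qed
  have ogd: "(\<Sum>k<n. g k \<bullet> (xs - X k)) \<le> 3 * sqrt (S n)" for n
  proof (cases n)
    case 0 then show ?thesis by (simp add: S0)
  next
    case (Suc m)
    have w0: "0 \<le> w k" for k unfolding w_def using S0le by simp
    have wm: "w k \<le> w (Suc k)" for k unfolding w_def using Smono[of "Suc k" "Suc (Suc k)"] by simp
    have d0: "0 \<le> d k" for k unfolding d_def by simp
    have d2: "d k \<le> 2" for k unfolding d_def by (rule simplex_diam[OF Xs xs])
    have A: "(\<Sum>k<n. w k * (d k - d (Suc k))) \<le> 2 * w (n - 1)"
      by (rule abel[of w d, OF w0 wm d0 d2])
    have "2 * w (n - 1) = sqrt 2 * sqrt (S n)" unfolding w_def using Suc by (simp add: real_sqrt_mult)
    also have "\<dots> \<le> 2 * sqrt (S n)"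
    proof (rule mult_right_mono)
      show "sqrt 2 \<le> (2::real)" by (rule real_le_lsqrt) auto
      show "0 \<le> sqrt (S n)" using S0le[of n] by simp
    qed
    finally have A2: "(\<Sum>k<n. w k * (d k - d (Suc k))) \<le> 2 * sqrt (S n)" using A by linarith
    have "(\<Sum>k<n. (norm (g k))\<^sup>2 / (2 * sqrt (S (Suc k))))
          = (\<Sum>k<n. (norm (g k))\<^sup>2 / sqrt (\<Sum>j<Suc k. (norm (g j))\<^sup>2)) / 2"
      unfolding Ssum by (simp add: sum_divide_distrib mult.commute)
    also have "\<dots> \<le> (2 * sqrt (\<Sum>j<n. (norm (g j))\<^sup>2)) / 2"
      by (intro divide_right_mono sqrt_sum) simp_all
    finally have B: "(\<Sum>k<n. (norm (g k))\<^sup>2 / (2 * sqrt (S (Suc k)))) \<le> sqrt (S n)"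
      unfolding Ssum by simp
    have "(\<Sum>k<n. g k \<bullet> (xs - X k)) \<le> (\<Sum>k<n. w k * (d k - d (Suc k)) + (norm (g k))\<^sup>2 / (2 * sqrt (S (Suc k))))"
      by (rule sum_mono) (rule step)
    also have "\<dots> = (\<Sum>k<n. w k * (d k - d (Suc k))) + (\<Sum>k<n. (norm (g k))\<^sup>2 / (2 * sqrt (S (Suc k))))"
      by (rule sum.distrib)
    finally show ?thesis using A2 B by linarith
  qed

  define D where "D k = (\<Sum>i\<in>UNIV. (Q k $ i)\<^sup>2)" for k
  define Dr where "Dr k = (\<Sum>i\<in>UNIV. Q k $ i * r (Suc k) $ i * (xs $ i - X k $ i))" for k
  define Rk where "Rk k = (\<Sum>i\<in>UNIV. r (Suc k) $ i * (xs $ i - X k $ i))" for k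
  have drift_i: "(Q (Suc k) $ i)\<^sup>2 \<le> (Q k $ i)\<^sup>2 + 2 * (Q k $ i * r (Suc k) $ i * (xs $ i - X k $ i)) + 1"
    if kT: "k < T" for k i
  proof (cases "i \<in> P")
    case False
    then show ?thesis using QnP[OF False] by simp
  next
    case True
    define q where "q = Q k $ i"
    define \<rho> where "\<rho> = r (Suc k) $ i"
    define x where "x = X k $ i"
    define z where "z = xs $ i"
    define l where "l = lam $ i"
    have q0: "0 \<le> q" unfolding q_def by (rule Qnn)
    have \<rho>01: "0 \<le> \<rho>" "\<rho> \<le> 1" unfolding \<rho>_def using rbk[OF kT] by auto
    have x01: "0 \<le> x" "x \<le> 1" unfolding x_def using X01 by auto
    have l01: "0 \<le> l" "l \<le> 1" unfolding l_def using lb True by auto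
    have lz: "l \<le> \<rho> * z" unfolding l_def \<rho>_def z_def using feas[OF True] kT by simp
    have Qs: "Q (Suc k) $ i = max 0 (q + l - \<rho> * x)"
      unfolding rec3 q_def l_def \<rho>_def x_def using True by simp
    have "(max 0 (q + l - \<rho> * x))\<^sup>2 \<le> (q + l - \<rho> * x)\<^sup>2" by (cases "0 \<le> q + l - \<rho> * x") auto
    moreover have "(q + l - \<rho> * x)\<^sup>2 = q\<^sup>2 + 2 * (q * l) - 2 * (q * (\<rho> * x)) + (l - \<rho> * x)\<^sup>2"
      by (simp add: power2_eq_square algebra_simps)
    moreover have "(l - \<rho> * x)\<^sup>2 \<le> 1"
    proof -
      have "\<rho> * x \<le> 1" using \<rho>01 x01 by (simp add: mult_le_one)
      moreover have "0 \<le> \<rho> * x" using \<rho>01 x01 by simp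
      ultimately have "\<bar>l - \<rho> * x\<bar> \<le> 1" using l01 by linarith
      then show ?thesis by (simp add: abs_square_le_1)
    qed
    moreover have "q * l \<le> q * (\<rho> * z)" using lz q0 by (rule mult_left_mono)
    moreover have "q * \<rho> * (z - x) = q * (\<rho> * z) - q * (\<rho> * x)" by (simp add: algebra_simps)
    ultimately have "(Q (Suc k) $ i)\<^sup>2 \<le> q\<^sup>2 + 2 * (q * \<rho> * (z - x)) + 1" unfolding Qs by linarith
    then show ?thesis unfolding q_def \<rho>_def x_def z_def .
  qed
  have drift: "D (Suc k) \<le> D k + 2 * Dr k + N" if kT: "k < T" for k
  proof -
    have "D (Suc k) \<le> (\<Sum>i\<in>UNIV. (Q k $ i)\<^sup>2 + 2 * (Q k $ i * r (Suc k) $ i * (xs $ i - X k $ i)) + 1)"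
      unfolding D_def by (rule sum_mono) (rule drift_i[OF kT])
    also have "\<dots> = D k + 2 * Dr k + N"
      unfolding D_def Dr_def N_def by (simp add: sum.distrib sum_distrib_left)
    finally show ?thesis .
  qed
  have gdec: "g k \<bullet> (xs - X k) = Dr k + V * Rk k" for k
    unfolding g_def Dr_def Rk_def inner_vec_def
    by (simp add: sum_distrib_left sum.distrib[symmetric] algebra_simps)
  have Rk1: "- 1 \<le> Rk k" if kT: "k < T" for k
  proof -
    have "(\<Sum>i\<in>UNIV. r (Suc k) $ i * X k $ i) \<le> (\<Sum>i\<in>UNIV. X k $ i)"
      by (rule sum_mono) (use rbk[OF kT] X01 in \<open>simp add: mult_left_le_one_le\<close>)
    also have "\<dots> = 1" using Xs[of k] by (simp add: prob_simplex_def)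
    finally have a: "(\<Sum>i\<in>UNIV. r (Suc k) $ i * X k $ i) \<le> 1" .
    have b: "0 \<le> (\<Sum>i\<in>UNIV. r (Suc k) $ i * xs $ i)"
      by (rule sum_nonneg) (use rbk[OF kT] xs01 in simp)
    have "Rk k = (\<Sum>i\<in>UNIV. r (Suc k) $ i * xs $ i) - (\<Sum>i\<in>UNIV. r (Suc k) $ i * X k $ i)"
      unfolding Rk_def by (simp add: right_diff_distrib sum_subtractf)
    then show ?thesis using a b by linarith
  qed
  have D0: "D 0 = 0" unfolding D_def Q0 by simp
  have Dnn: "0 \<le> D k" for k unfolding D_def by (simp add: sum_nonneg)
  have Dacc: "D n \<le> 2 * (\<Sum>k<n. Dr k) + real n * N" if "n \<le> T" for n
    using that
  proof (induction n)
    case 0 then show ?case using D0 by simp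
  next
    case (Suc n)
    then have "D n \<le> 2 * (\<Sum>k<n. Dr k) + real n * N" by simp
    moreover have "D (Suc n) \<le> D n + 2 * Dr n + N" using Suc.prems by (intro drift) simp
    ultimately show ?case by (simp add: algebra_simps)
  qed
  have key: "V * (\<Sum>k<n. Rk k) + D n / 2 \<le> 3 * sqrt (S n) + real n * N / 2" if "n \<le> T" for n
  proof -
    have "(\<Sum>k<n. g k \<bullet> (xs - X k)) = (\<Sum>k<n. Dr k) + V * (\<Sum>k<n. Rk k)"
      unfolding gdec by (simp add: sum.distrib sum_distrib_left)
    then show ?thesis using ogd[of n] Dacc[OF that] by linarith
  qed
  define u where "u = sqrt (S T)"
  have u0: "0 \<le> u" unfolding u_def using S0le[of T] by simp
  have N0: "0 \<le> N" unfolding N_def by simp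
  have Dbound: "D n \<le> 6 * u + real T * N + 2 * V * real T" if "n \<le> T" for n
  proof -
    have "- real n \<le> (\<Sum>k<n. Rk k)"
    proof -
      have "(\<Sum>k<n. - 1) \<le> (\<Sum>k<n. Rk k)"
        by (rule sum_mono) (use that Rk1 in simp)
      then show ?thesis by simp
    qed
    then have "V * (- real n) \<le> V * (\<Sum>k<n. Rk k)" using V0 by (rule mult_left_mono)
    then have "D n \<le> 6 * sqrt (S n) + real n * N + 2 * V * real n" using key[OF that] by linarith
    moreover have "sqrt (S n) \<le> u" unfolding u_def using Smono[OF that] by simp
    moreover have "real n * N \<le> real T * N" using that N0 by (simp add: mult_right_mono)
    moreover have "V * real n \<le> V * real T" using that V0 by (simp add: mult_left_mono)
    ultimately show ?thesis by linarith
  qed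
  have gbound: "(norm (g k))\<^sup>2 \<le> 2 * D k + 2 * N * V\<^sup>2" if kT: "k < T" for k
  proof -
    have "(norm (g k))\<^sup>2 = (\<Sum>i\<in>UNIV. ((Q k $ i + V) * r (Suc k) $ i)\<^sup>2)"
      unfolding power2_norm_eq_inner inner_vec_def g_def by (simp add: power2_eq_square)
    also have "\<dots> \<le> (\<Sum>i\<in>UNIV. 2 * (Q k $ i)\<^sup>2 + 2 * V\<^sup>2)"
    proof (rule sum_mono)
      fix i
      have r01: "0 \<le> r (Suc k) $ i" "r (Suc k) $ i \<le> 1" using rbk[OF kT] by auto
      have "((Q k $ i + V) * r (Suc k) $ i)\<^sup>2 = (Q k $ i + V)\<^sup>2 * (r (Suc k) $ i)\<^sup>2"
        by (simp add: power_mult_distrib)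
      also have "\<dots> \<le> (Q k $ i + V)\<^sup>2 * 1"
        by (rule mult_left_mono) (use r01 in \<open>auto simp: power_le_one\<close>)
      also have "\<dots> \<le> 2 * (Q k $ i)\<^sup>2 + 2 * V\<^sup>2"
        using sum_squares_bound[of "Q k $ i" V] by (simp add: power2_eq_square algebra_simps)
      finally show "((Q k $ i + V) * r (Suc k) $ i)\<^sup>2 \<le> 2 * (Q k $ i)\<^sup>2 + 2 * V\<^sup>2" .
    qed
    also have "\<dots> = 2 * D k + 2 * N * V\<^sup>2"
      unfolding D_def N_def by (simp add: sum.distrib sum_distrib_left)
    finally show ?thesis .
  qed
  have "u\<^sup>2 = S T" unfolding u_def using S0le[of T] by simp
  also have "\<dots> = (\<Sum>k<T. (norm (g k))\<^sup>2)" by (rule Ssum)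
  also have "\<dots> \<le> (\<Sum>k<T. 2 * (6 * u + real T * N + 2 * V * real T) + 2 * N * V\<^sup>2)"
  proof (rule sum_mono)
    fix k assume "k \<in> {..<T}"
    then have kT: "k < T" by simp
    show "(norm (g k))\<^sup>2 \<le> 2 * (6 * u + real T * N + 2 * V * real T) + 2 * N * V\<^sup>2"
      using gbound[OF kT] Dbound[of k] kT by simp
  qed
  also have "\<dots> = 12 * real T * u + 2 * (real T)^2 * N + 4 * V * (real T)^2 + 2 * N * real T * V^2"
    by (simp add: power2_eq_square algebra_simps)
  finally have U: "u^2 \<le> 12 * real T * u + 2 * (real T)^2 * N + 4 * V * (real T)^2 + 2 * N * real T * V^2" .
  have "(\<Sum>t=1..T. \<Sum>i\<in>UNIV. r t $ i * (xs $ i - banditq_x r P lam (\<lambda>_. V) x1 t $ i)) = (\<Sum>k<T. Rk k)"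
    unfolding Rk_def X_def st_def banditq_x_def
    by (simp add: sum.atLeast1_atMost_eq)
  moreover have "V * (\<Sum>k<T. Rk k) \<le> 3 * u + real T * N / 2"
    using key[of T] Dnn[of T] unfolding u_def by simp
  ultimately show ?thesis using U u0 unfolding N_def by auto
qed



lemma final_arith:
  fixes T N V c1 c2 u R :: real
  assumes T1: "1 \<le> T" and N0: "0 \<le> N" and c1: "0 < c1"
    and Vlo: "c1 * sqrt T \<le> V" and Vhi: "V \<le> c2 * sqrt T" and u0: "0 \<le> u"
    and U: "u^2 \<le> 12 * T * u + 2 * T^2 * N + 4 * V * T^2 + 2 * N * T * V^2"
    and VR: "V * R \<le> 3 * u + T * N / 2"
  shows "R \<le> (3 * (12 + sqrt (2 * N + 4 * \<bar>c2\<bar> + 2 * N * c2^2)) + N / 2) / c1 * T powr (3/4)"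
proof -
  define q where "q = T powr (1/4)"
  have Tp: "0 < T" using T1 by simp
  have q1: "1 \<le> q" unfolding q_def using T1 by (intro ge_one_powr_ge_zero) auto
  have q0: "0 < q" using q1 by simp
  have Tq: "T = q^4"
  proof -
    have "q^4 = T powr (real 4 * (1/4))" unfolding q_def using Tp by (subst powr_power) auto
    then show ?thesis using Tp by simp
  qed
  have sq: "sqrt T = q^2"
    unfolding Tq by (metis power_even_eq real_sqrt_abs real_sqrt_power abs_of_nonneg q0 less_imp_le num_double numeral_times_numeral power2_eq_square real_sqrt_mult_self)
  have T34: "T powr (3/4) = q^3"
  proof -
    have "T powr (3/4) = (T powr (1/4)) powr (real 3)" by (simp add: powr_powr)
    then show ?thesis unfolding q_def using Tp by (simp add: powr_realpow)
  qed
  define B where "B = 2 * N + 4 * \<bar>c2\<bar> + 2 * N * c2^2"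
  define K where "K = 3 * (12 + sqrt B) + N / 2"
  have Vp: "0 < V" using Vlo c1 Tp by (smt (verit) mult_pos_pos real_sqrt_gt_zero)
  have c2p: "0 < c2" using Vp Vhi Tp by (smt (verit) mult_nonpos_nonneg real_sqrt_ge_zero)
  have V1: "c1 * q^2 \<le> V" "V \<le> c2 * q^2" using Vlo Vhi sq by auto
  have q8: "q^8 \<le> q^10" using q1 by (intro power_increasing) auto
  have q45: "q^4 \<le> q^5" using q1 by (intro power_increasing) auto
  have B0: "0 \<le> B" unfolding B_def using N0 by simp
  have b1: "2 * T^2 * N \<le> 2 * N * q^10"
  proof -
    have "N * q^8 \<le> N * q^10" by (rule mult_left_mono) (use q8 N0 in auto)
    then show ?thesis unfolding Tq by (simp add: power_mult[symmetric] algebra_simps)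
  qed
  have b2: "4 * V * T^2 \<le> 4 * c2 * q^10"
  proof -
    have "V * q^8 \<le> (c2 * q^2) * q^8" using V1 by (intro mult_right_mono) auto
    then show ?thesis unfolding Tq by (simp add: power_mult[symmetric] algebra_simps power_add[symmetric])
  qed
  have b3: "2 * N * T * V^2 \<le> 2 * N * c2^2 * q^10"
  proof -
    have "V^2 \<le> (c2 * q^2)^2" using V1 Vp by (intro power_mono) auto
    then have "N * q^4 * V^2 \<le> N * q^4 * (c2 * q^2)^2" using N0 by (intro mult_left_mono) auto
    also have "\<dots> = N * c2^2 * q^8" by (simp add: power_mult_distrib power_mult[symmetric] algebra_simps power_add[symmetric])
    also have "\<dots> \<le> N * c2^2 * q^10" using q8 N0 by (intro mult_left_mono) auto
    finally show ?thesis unfolding Tq by simp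
  qed
  have bB: "2 * T^2 * N + 4 * V * T^2 + 2 * N * T * V^2 \<le> B * q^10"
    using b1 b2 b3 c2p unfolding B_def by (simp add: algebra_simps)
  have "u \<le> 12 * T + sqrt (2 * T^2 * N + 4 * V * T^2 + 2 * N * T * V^2)"
  proof (rule ccontr)
    let ?b = "2 * T^2 * N + 4 * V * T^2 + 2 * N * T * V^2"
    assume "\<not> ?thesis"
    then have h: "u > 12 * T + sqrt ?b" by simp
    have b0: "0 \<le> ?b" using N0 Vp Tp by simp
    have "u * (12 * T + sqrt ?b) < u * u"
      by (rule mult_strict_left_mono) (use h b0 Tp in \<open>auto intro: le_less_trans[of 0 "12 * T + sqrt ?b"]\<close>)
    moreover have "sqrt ?b * sqrt ?b \<le> u * sqrt ?b"
      by (rule mult_right_mono) (use h b0 Tp in auto)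
    moreover have "sqrt ?b * sqrt ?b = ?b" using b0 by simp
    moreover have "u * (12 * T + sqrt ?b) = 12 * T * u + u * sqrt ?b" by (simp add: algebra_simps)
    moreover have "u * u \<le> 12 * T * u + ?b" using U by (simp add: power2_eq_square algebra_simps)
    ultimately show False by linarith
  qed
  also have "\<dots> \<le> 12 * q^4 + sqrt B * q^5"
  proof -
    have "sqrt (2 * T^2 * N + 4 * V * T^2 + 2 * N * T * V^2) \<le> sqrt (B * q^10)"
      using bB by simp
    also have "\<dots> = sqrt B * q^5"
    proof -
      have "sqrt (q^10) = sqrt ((q^5)^2)" by (simp add: power_mult[symmetric])
      also have "\<dots> = q^5" using q0 by (simp only: real_sqrt_abs) simp
      finally have "sqrt (q^10) = q^5" .
      then show ?thesis by (simp add: real_sqrt_mult)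
    qed
    finally show ?thesis unfolding Tq by simp
  qed
  also have "\<dots> \<le> (12 + sqrt B) * q^5"
    using q45 by (simp add: algebra_simps)
  finally have ub: "u \<le> (12 + sqrt B) * q^5" .
  have "V * R \<le> 3 * ((12 + sqrt B) * q^5) + q^5 * N / 2"
  proof -
    have "T * N \<le> q^5 * N" unfolding Tq using q45 N0 by (rule mult_right_mono)
    then show ?thesis using VR ub by linarith
  qed
  also have "\<dots> = K * q^5" unfolding K_def by (simp add: algebra_simps)
  finally have VRK: "V * R \<le> K * q^5" .
  have K0: "0 \<le> K" unfolding K_def using B0 N0 by simp
  have "R \<le> K * q^5 / V" using VRK Vp by (simp add: pos_le_divide_eq mult.commute)
  also have "\<dots> \<le> K * q^5 / (c1 * q^2)"
    by (rule divide_left_mono) (use V1 K0 q0 c1 Vp in auto)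
  also have "\<dots> = K / c1 * q^3" using q0 c1 by (simp add: field_simps power_add[symmetric] eval_nat_numeral)
  finally show ?thesis unfolding T34 K_def B_def .
qed

theorem proposition3:
  fixes c1 c2 :: real
  assumes "0 < c1"
  shows "\<exists>C. \<forall>(T::nat) (r::nat \<Rightarrow> real ^ 'n::finite) (P::'n set) (lam::real ^ 'n) (x1::real ^ 'n) (V::real).
           1 \<le> T \<longrightarrow>
           (\<forall>t\<in>{1..T}. \<forall>i. 0 \<le> r t $ i \<and> r t $ i \<le> 1) \<longrightarrow>
           (\<forall>i\<in>P. 0 \<le> lam $ i \<and> lam $ i \<le> 1) \<longrightarrow>
           (\<forall>i. i \<notin> P \<longrightarrow> lam $ i = 0) \<longrightarrow>
           (\<Sum>i\<in>P. lam $ i) \<le> 1 \<longrightarrow>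
           x1 \<in> prob_simplex \<longrightarrow>
           c1 * sqrt (real T) \<le> V \<longrightarrow> V \<le> c2 * sqrt (real T) \<longrightarrow>
           feasible_set r P lam T \<noteq> {} \<longrightarrow>
           banditq_regret r P lam (\<lambda>_. V) x1 T \<le> C * real T powr (3/4)"
proof -
  define N where "N = real CARD('n)"
  define C where "C = (3 * (12 + sqrt (2 * N + 4 * \<bar>c2\<bar> + 2 * N * c2^2)) + N / 2) / c1"
  show ?thesis
  proof (rule exI[of _ C], intro allI impI)
    fix T :: nat and r :: "nat \<Rightarrow> real ^ 'n" and P :: "'n set" and lam x1 :: "real ^ 'n" and V :: real
    assume T1: "1 \<le> T"
      and rb: "\<forall>t\<in>{1..T}. \<forall>i. 0 \<le> r t $ i \<and> r t $ i \<le> 1"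
      and lb: "\<forall>i\<in>P. 0 \<le> lam $ i \<and> lam $ i \<le> 1"
      and l0: "\<forall>i. i \<notin> P \<longrightarrow> lam $ i = 0"
      and ls: "(\<Sum>i\<in>P. lam $ i) \<le> 1"
      and x1: "x1 \<in> prob_simplex"
      and Vlo: "c1 * sqrt (real T) \<le> V" and Vhi: "V \<le> c2 * sqrt (real T)"
      and ne: "feasible_set r P lam T \<noteq> {}"
    have V0: "0 \<le> V"
    proof -
      have "0 \<le> c1 * sqrt (real T)" using assms by simp
      then show ?thesis using Vlo by linarith
    qed
    show "banditq_regret r P lam (\<lambda>_. V) x1 T \<le> C * real T powr (3/4)"
      unfolding banditq_regret_def
    proof (rule cSUP_least[OF ne])
      fix xs assume xsF: "xs \<in> feasible_set r P lam T"
      from main_bound[OF rb lb l0 x1 V0 xsF] obtain u where u0: "0 \<le> u"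
        and U: "u^2 \<le> 12 * real T * u + 2 * (real T)^2 * real CARD('n) + 4 * V * (real T)^2
                      + 2 * real CARD('n) * real T * V^2"
        and VR: "V * (\<Sum>t=1..T. \<Sum>i\<in>UNIV. r t $ i * (xs $ i - banditq_x r P lam (\<lambda>_. V) x1 t $ i))
               \<le> 3 * u + real T * real CARD('n) / 2"
        by blast
      have T1': "1 \<le> real T" using T1 by simp
      show "(\<Sum>t=1..T. \<Sum>i\<in>UNIV. r t $ i * (xs $ i - banditq_x r P lam (\<lambda>_. V) x1 t $ i))
            \<le> C * real T powr (3/4)"
        unfolding C_def N_def
        by (rule final_arith[OF T1' _ assms Vlo Vhi u0 U VR]) simp
    qed
  qed
qed

end
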